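(* Assume (A). Let $t>t_0$, $s\in(0,t)$ with $k(s,t)\ge c_1s$. Define $(\theta_1^*(s,t),\theta_2^*(s,t))^\top:=\Sigma(s,t)^{-1}(b+c_2t,\ c_1s)^\top$ and $$f(r):=-\mathbb E\big(A(r,0)\mid A(-t,0)=b+c_2t,\ A(-s,0)=c_1s\big)=-\theta_1^*(s,t)\Gamma(-r,t)-\theta_2^*(s,t)\Gamma(-r,s),\quad r\in\mathbb R.$$ Then $f\in\mathcal U^{s,t}\cap R$ and $I(f)=\inf_{g\in\mathcal U^{s,t}}I(g)=\Lambda_{s,t}(b+c_2t,\ b+c_2t-c_1s)$.
   Context: $v:[0,\infty)\to[0,\infty)$ is continuous, $v(0)=0$, $\lim_{t\to\infty}v(t)/t^\alpha=0$ for some $\alpha<2$; $A$ is a centered Gaussian process on $\mathbb R$ with continuous paths, $A(0)=0$, stationary increments and $\mathrm{Var}(A(t)-A(s))=v(|t-s|)$; $A(s,t):=A(t)-A(s)$; $\Gamma(s,t):=\tfrac12(v(|s|)+v(|t|)-v(|t-s|))$. $\Omega$: continuous $\omega:\mathbb R\to\mathbb R$ with $\omega(0)=0$, $\omega(t)/(1+|t|)\to0$ as $t\to\pm\infty$. $R$: reproducing kernel Hilbert space of $\Gamma$ (closure of span $\{\Gamma(u,\cdot)\}$ with $\langle\Gamma(u,\cdot),\Gamma(w,\cdot)\rangle_R=\Gamma(u,w)$); $I(\omega)=\frac12\|\omega\|_R^2$ on $R$, $\infty$ elsewhere. Fix $b>0$, $c_1>c_2>0$, $t_0:=b/(c_1-c_2)$;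 $\mathcal U^{s,t}:=\{f\in\Omega:-f(-t)\ge b+c_2t,\ f(-s)-f(-t)\ge b+c_2t-c_1s\}$. For $0<s<t$, $\Sigma(s,t):=\begin{pmatrix}v(t)&\Gamma(s,t)\\ \Gamma(s,t)&v(s)\end{pmatrix}$ (assumed nonsingular), $\Lambda_{s,t}(y,z):=\frac12(y,z)\Sigma(t-s,t)^{-1}(y,z)^\top$, $k(s,t):=\frac{\Gamma(s,t)}{v(t)}(b+c_2t)$. Assumption (A): $\sqrt v\in C^2([0,\infty))$, strictly increasing and strictly concave. *)

theory Defs
  imports "HOL-Probability.Probability"
begin

definition Gam :: "(real \<Rightarrow> real) \<Rightarrow> real \<Rightarrow> real \<Rightarrow> real" where
  "Gam v s t = (v \<bar>s\<bar> + v \<bar>t\<bar> - v \<bar>t - s\<bar>) / 2"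

definition Omega :: "(real \<Rightarrow> real) set" where
  "Omega = {\<omega>. continuous_on UNIV \<omega> \<and> \<omega> 0 = 0 \<and>
      ((\<lambda>t. \<omega> t / (1 + \<bar>t\<bar>)) \<longlongrightarrow> 0) at_top \<and>
      ((\<lambda>t. \<omega> t / (1 + \<bar>t\<bar>)) \<longlongrightarrow> 0) at_bot}"

(* RKHS of a kernel K, built as the completion of span{K(u,.)}:
   elements of the span are given by finitely supported coefficient functions c *)
definition supp_c :: "(real \<Rightarrow> real) \<Rightarrow> real set" where
  "supp_c c = {u. c u \<noteq> 0}"

definition span_fun :: "(real \<Rightarrow> real \<Rightarrow> real) \<Rightarrow> (real \<Rightarrow> real) \<Rightarrow> real \<Rightarrow> real" where
  "span_fun K c = (\<lambda>x. \<Sum>u\<in>supp_c c. c u * K u x)"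

(* squared pre-Hilbert norm of span_fun K c, i.e. <h,h> with <K(u,.),K(w,.)> = K(u,w) *)
definition span_sqnorm :: "(real \<Rightarrow> real \<Rightarrow> real) \<Rightarrow> (real \<Rightarrow> real) \<Rightarrow> real" where
  "span_sqnorm K c = (\<Sum>u\<in>supp_c c. \<Sum>w\<in>supp_c c. c u * c w * K u w)"

definition approximating :: "(real \<Rightarrow> real \<Rightarrow> real) \<Rightarrow> (nat \<Rightarrow> real \<Rightarrow> real) \<Rightarrow> (real \<Rightarrow> real) \<Rightarrow> bool" where
  "approximating K cs \<omega> \<longleftrightarrow>
     (\<forall>n. finite (supp_c (cs n))) \<and>
     (\<forall>e>0. \<exists>N. \<forall>n\<ge>N. \<forall>m\<ge>N. span_sqnorm K (\<lambda>u. cs n u - cs m u) < e) \<and>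
     (\<forall>x. (\<lambda>n. span_fun K (cs n) x) \<longlonglongrightarrow> \<omega> x)"

definition rkhs :: "(real \<Rightarrow> real \<Rightarrow> real) \<Rightarrow> (real \<Rightarrow> real) set" where
  "rkhs K = {\<omega>. \<exists>cs. approximating K cs \<omega>}"

definition rkhs_sqnorm :: "(real \<Rightarrow> real \<Rightarrow> real) \<Rightarrow> (real \<Rightarrow> real) \<Rightarrow> real" where
  "rkhs_sqnorm K \<omega> = (THE a. \<forall>cs. approximating K cs \<omega> \<longrightarrow> (\<lambda>n. span_sqnorm K (cs n)) \<longlonglongrightarrow> a)"

definition rate :: "(real \<Rightarrow> real) \<Rightarrow> (real \<Rightarrow> real) \<Rightarrow> ereal" where
  "rate v \<omega> = (if \<omega> \<in> rkhs (Gam v) then ereal (rkhs_sqnorm (Gam v) \<omega> / 2) else \<infinity>)"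

definition U_set :: "real \<Rightarrow> real \<Rightarrow> real \<Rightarrow> real \<Rightarrow> real \<Rightarrow> (real \<Rightarrow> real) set" where
  "U_set b c1 c2 s t = {f \<in> Omega. - f (-t) \<ge> b + c2 * t \<and> f (-s) - f (-t) \<ge> b + c2 * t - c1 * s}"

definition Sigma_mat :: "(real \<Rightarrow> real) \<Rightarrow> real \<Rightarrow> real \<Rightarrow> real^2^2" where
  "Sigma_mat v s t = vector [vector [v t, Gam v s t], vector [Gam v s t, v s]]"

definition Lambda :: "(real \<Rightarrow> real) \<Rightarrow> real \<Rightarrow> real \<Rightarrow> real \<Rightarrow> real \<Rightarrow> real" where
  "Lambda v s t y z = (let w = (vector [y, z] :: real^2) in
      (1/2) * (w \<bullet> (matrix_inv (Sigma_mat v (t - s) t) *v w)))"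

definition kfun :: "(real \<Rightarrow> real) \<Rightarrow> real \<Rightarrow> real \<Rightarrow> real \<Rightarrow> real \<Rightarrow> real" where
  "kfun v b c2 s t = Gam v s t / v t * (b + c2 * t)"

definition theta_star :: "(real \<Rightarrow> real) \<Rightarrow> real \<Rightarrow> real \<Rightarrow> real \<Rightarrow> real \<Rightarrow> real \<Rightarrow> real^2" where
  "theta_star v b c1 c2 s t = matrix_inv (Sigma_mat v s t) *v vector [b + c2 * t, c1 * s]"

definition fstar :: "(real \<Rightarrow> real) \<Rightarrow> real \<Rightarrow> real \<Rightarrow> real \<Rightarrow> real \<Rightarrow> real \<Rightarrow> real \<Rightarrow> real" where
  "fstar v b c1 c2 s t r = - (theta_star v b c1 c2 s t $ 1) * Gam v (-r) t
                            - (theta_star v b c1 c2 s t $ 2) * Gam v (-r) s"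

definition strictly_concave_on :: "real set \<Rightarrow> (real \<Rightarrow> real) \<Rightarrow> bool" where
  "strictly_concave_on S g \<longleftrightarrow> (\<forall>x\<in>S. \<forall>y\<in>S. x \<noteq> y \<longrightarrow> (\<forall>l::real. 0 < l \<and> l < 1 \<longrightarrow>
       g (l * x + (1 - l) * y) > l * g x + (1 - l) * g y))"

definition C2_nonneg :: "(real \<Rightarrow> real) \<Rightarrow> bool" where
  "C2_nonneg g \<longleftrightarrow> (\<exists>g1 g2. (\<forall>x\<ge>0. (g has_real_derivative g1 x) (at x within {0..})) \<and>
       (\<forall>x\<ge>0. (g1 has_real_derivative g2 x) (at x within {0..})) \<and> continuous_on {0..} g2)"

definition assumption_A :: "(real \<Rightarrow> real) \<Rightarrow> bool" where
  "assumption_A v \<longleftrightarrow> C2_nonneg (\<lambda>x. sqrt (v x)) \<and> strict_mono_on {0..} (\<lambda>x. sqrt (v x))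
      \<and> strictly_concave_on {0..} (\<lambda>x. sqrt (v x))"

definition centered_gaussian :: "'a measure \<Rightarrow> ('a \<Rightarrow> real) \<Rightarrow> bool" where
  "centered_gaussian M X \<longleftrightarrow> X \<in> borel_measurable M \<and>
     ((AE x in M. X x = 0) \<or> (\<exists>\<sigma>>0. distributed M lborel X (normal_density 0 \<sigma>)))"

definition centered_gaussian_process :: "'a measure \<Rightarrow> (real \<Rightarrow> 'a \<Rightarrow> real) \<Rightarrow> bool" where
  "centered_gaussian_process M A \<longleftrightarrow>
     (\<forall>F c. finite F \<longrightarrow> centered_gaussian M (\<lambda>x. \<Sum>u\<in>F. c u * A u x))"

end

theory Submission
  imports Defs
begin


lemma vec2_eq: "(x::real^2) = y \<longleftrightarrow> x$1 = y$1 \<and> x$2 = y$2"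
  by (simp add: vec_eq_iff forall_2)

lemma mat2_eq: "(A::real^2^2) = B \<longleftrightarrow> A$1$1 = B$1$1 \<and> A$1$2 = B$1$2 \<and> A$2$1 = B$2$1 \<and> A$2$2 = B$2$2"
  by (simp add: vec_eq_iff forall_2)

lemma matrix_inv_eqI:
  fixes A B :: "real^2^2"
  assumes "A ** B = mat 1" "B ** A = mat 1"
  shows "matrix_inv A = B"
proof -
  have ex: "\<exists>A'. A ** A' = mat 1 \<and> A' ** A = mat 1" using assms by blast
  define C where "C = matrix_inv A"
  have C: "A ** C = mat 1 \<and> C ** A = mat 1"
    unfolding C_def matrix_inv_def by (rule someI_ex[OF ex])
  have "C = C ** (A ** B)" using assms by simp
  also have "\<dots> = (C ** A) ** B" by (simp add: matrix_mul_assoc)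
  also have "\<dots> = B" using C by simp
  finally show ?thesis by (simp add: C_def)
qed

lemma inv2:
  fixes a b d :: real
  assumes D: "a*d - b*b \<noteq> 0"
  shows "matrix_inv (vector [vector [a,b], vector[b,d]] :: real^2^2)
     = vector [vector [d/(a*d-b*b), -b/(a*d-b*b)], vector[-b/(a*d-b*b), a/(a*d-b*b)]]"
proof -
  define D where "D = a*d - b*b"
  have D': "D \<noteq> 0" using D by (simp add: D_def)
  have "(a*d-b*b)^2 > 0" using D by simp
  then have sq: "a*(a*(d*d)) + b*(b*(b*b)) \<noteq> a*(b*(b*(d*2)))" by (simp add: power2_eq_square algebra_simps)
  show ?thesis unfolding D_def[symmetric]
    apply (rule matrix_inv_eqI)
    using D' sq by (auto simp: mat2_eq matrix_matrix_mult_def sum_2 mat_def divide_simps D_def algebra_simps)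
qed

lemma mulv2: "(A::real^2^2) *v x = vector [A$1$1 * x$1 + A$1$2 * x$2, A$2$1 * x$1 + A$2$2*x$2]"
  by (simp add: vec2_eq matrix_vector_mult_def sum_2)

lemma inner2: "(x::real^2) \<bullet> y = x$1*y$1 + x$2*y$2"
  by (simp add: inner_vec_def sum_2)

lemma det_mat2: "det (vector [vector [a,b], vector[c,d]] :: real^2^2) = a*d - b*c"
  by (simp add: det_2)




lemma (in prob_space) cg_sq:
  assumes "centered_gaussian M X"
  shows "integrable M (\<lambda>x. (X x)^2) \<and> expectation X = 0"
proof -
  have Xm: "X \<in> borel_measurable M" using assms by (simp add: centered_gaussian_def)
  consider "AE x in M. X x = 0" | \<sigma> where "\<sigma> > 0" "distributed M lborel X (normal_density 0 \<sigma>)"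
    using assms by (auto simp: centered_gaussian_def)
  then show ?thesis
  proof cases
    case 1
    have "AE x in M. (X x)^2 = (\<lambda>x. 0) x" using 1 by auto
    then have i: "integrable M (\<lambda>x. (X x)^2) \<longleftrightarrow> integrable M (\<lambda>x. 0::real)"
      using Xm by (intro integrable_cong_AE) auto
    have e: "expectation X = expectation (\<lambda>x. 0)" using 1 Xm by (intro integral_cong_AE) auto
    show ?thesis using i e by simp
  next
    case 2
    have "integrable lborel (\<lambda>x. normal_density 0 \<sigma> x * (x - 0)^2)"
      by (rule integrable_normal_moment[OF 2(1)])
    then have "integrable M (\<lambda>x. (X x)^2)"
      using distributed_integrable[OF 2(2), of "\<lambda>x. x^2"] by simp
    moreover have "expectation X = 0" using normal_distributed_expectation[OF 2] .
    ultimately show ?thesis by simp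
  qed
qed

lemma Gam_psd:
  fixes v :: "real \<Rightarrow> real" and M :: "'a measure" and A :: "real \<Rightarrow> 'a \<Rightarrow> real"
  assumes M: "prob_space M"
    and A_gauss: "centered_gaussian_process M A"
    and A0: "\<forall>x\<in>space M. A 0 x = 0"
    and A_var: "\<forall>r q. prob_space.variance M (\<lambda>x. A q x - A r x) = v \<bar>q - r\<bar>"
    and S: "finite S"
  shows "0 \<le> (\<Sum>u\<in>S. \<Sum>w\<in>S. c u * c w * Gam v u w)"
proof -
  interpret prob_space M by (rule M)
  have diff: "integrable M (\<lambda>x. (A q x - A r x)^2) \<and> expectation (\<lambda>x. (A q x - A r x)^2) = v \<bar>q - r\<bar>" for q r
  proof (cases "q = r")
    case True
    have "v \<bar>q - r\<bar> = prob_space.variance M (\<lambda>x. A q x - A r x)" using A_var by simp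
    also have "\<dots> = 0" using True by simp
    finally show ?thesis using True by simp
  next
    case False
    define c where "c = (\<lambda>u. if u = q then 1 else if u = r then -1 else (0::real))"
    have eq: "(\<lambda>x. \<Sum>u\<in>{q,r}. c u * A u x) = (\<lambda>x. A q x - A r x)"
      using False by (auto simp: c_def)
    have "centered_gaussian M (\<lambda>x. \<Sum>u\<in>{q,r}. c u * A u x)"
      using A_gauss by (simp add: centered_gaussian_process_def)
    then have cg: "integrable M (\<lambda>x. (A q x - A r x)^2) \<and> expectation (\<lambda>x. A q x - A r x) = 0"
      using cg_sq eq by metis
    have "v \<bar>q - r\<bar> = variance (\<lambda>x. A q x - A r x)" using A_var by simp
    then show ?thesis using cg by simp
  qed
  have sq: "integrable M (\<lambda>x. (A q x)^2) \<and> expectation (\<lambda>x. (A q x)^2) = v \<bar>q\<bar>" for q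
  proof -
    have e: "\<And>x. x \<in> space M \<Longrightarrow> (A q x - A 0 x)^2 = (A q x)^2" using A0 by simp
    have "integrable M (\<lambda>x. (A q x)^2) \<longleftrightarrow> integrable M (\<lambda>x. (A q x - A 0 x)^2)"
      using e by (intro Bochner_Integration.integrable_cong) auto
    moreover have "expectation (\<lambda>x. (A q x)^2) = expectation (\<lambda>x. (A q x - A 0 x)^2)"
      using e by (intro Bochner_Integration.integral_cong) auto
    ultimately show ?thesis using diff[of q 0] by simp
  qed
  have prod: "integrable M (\<lambda>x. A u x * A w x) \<and> expectation (\<lambda>x. A u x * A w x) = Gam v u w" for u w
  proof -
    have eq: "(\<lambda>x. A u x * A w x) = (\<lambda>x. ((A u x)^2 + (A w x)^2 - (A u x - A w x)^2) / 2)"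
      by (auto simp: power2_eq_square algebra_simps)
    have i1: "integrable M (\<lambda>x. (A u x)^2)" "integrable M (\<lambda>x. (A w x)^2)"
      "integrable M (\<lambda>x. (A u x - A w x)^2)" using sq diff by auto
    have "integrable M (\<lambda>x. ((A u x)^2 + (A w x)^2 - (A u x - A w x)^2) / 2)"
      using i1 by auto
    moreover have "expectation (\<lambda>x. ((A u x)^2 + (A w x)^2 - (A u x - A w x)^2) / 2)
        = (v \<bar>u\<bar> + v \<bar>w\<bar> - v \<bar>u - w\<bar>) / 2"
      using i1 sq[of u] sq[of w] diff[of u w] by simp
    moreover have "\<bar>u - w\<bar> = \<bar>w - u\<bar>" by simp
    ultimately show ?thesis unfolding eq Gam_def by simp
  qed
  have pi: "\<And>u w. integrable M (\<lambda>x. c u * c w * (A u x * A w x))" using prod by auto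
  have pi2: "\<And>u. integrable M (\<lambda>x. \<Sum>w\<in>S. c u * c w * (A u x * A w x))" using pi by auto
  have "(\<Sum>u\<in>S. \<Sum>w\<in>S. c u * c w * Gam v u w)
      = (\<Sum>u\<in>S. \<Sum>w\<in>S. expectation (\<lambda>x. c u * c w * (A u x * A w x)))"
    using prod by simp
  also have "\<dots> = (\<Sum>u\<in>S. expectation (\<lambda>x. \<Sum>w\<in>S. c u * c w * (A u x * A w x)))"
  proof (rule sum.cong[OF refl])
    fix u assume "u \<in> S"
    show "(\<Sum>w\<in>S. expectation (\<lambda>x. c u * c w * (A u x * A w x))) =
        expectation (\<lambda>x. \<Sum>w\<in>S. c u * c w * (A u x * A w x))"
      using Bochner_Integration.integral_sum[where I=S and f="\<lambda>w x. c u * c w * (A u x * A w x)" and M=M] pi by simp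
  qed
  also have "\<dots> = expectation (\<lambda>x. \<Sum>u\<in>S. \<Sum>w\<in>S. c u * c w * (A u x * A w x))"
    using Bochner_Integration.integral_sum[where I=S and f="\<lambda>u x. \<Sum>w\<in>S. c u * c w * (A u x * A w x)" and M=M] pi2 by simp
  also have "\<dots> = expectation (\<lambda>x. (\<Sum>u\<in>S. c u * A u x)^2)"
    by (simp add: power2_eq_square sum_product algebra_simps)
  also have "\<dots> \<ge> 0" by simp
  finally show ?thesis .
qed




definition ipf :: "(real \<Rightarrow> real \<Rightarrow> real) \<Rightarrow> real set \<Rightarrow> (real \<Rightarrow> real) \<Rightarrow> (real \<Rightarrow> real) \<Rightarrow> real" where
  "ipf K S c d = (\<Sum>u\<in>S. \<Sum>w\<in>S. c u * d w * K u w)"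

definition ip :: "(real \<Rightarrow> real \<Rightarrow> real) \<Rightarrow> (real \<Rightarrow> real) \<Rightarrow> (real \<Rightarrow> real) \<Rightarrow> real" where
  "ip K c d = ipf K (supp_c c \<union> supp_c d) c d"

definition nrm :: "(real \<Rightarrow> real \<Rightarrow> real) \<Rightarrow> (real \<Rightarrow> real) \<Rightarrow> real" where
  "nrm K c = sqrt (ip K c c)"

abbreviation fs :: "(real \<Rightarrow> real) \<Rightarrow> bool" where
  "fs c \<equiv> finite (supp_c c)"

lemma notin_supp: "u \<notin> supp_c c \<Longrightarrow> c u = 0"
  by (simp add: supp_c_def)

lemma supp_diff: "supp_c (\<lambda>u. c u - d u) \<subseteq> supp_c c \<union> supp_c d"
  by (auto simp: supp_c_def)
lemma supp_lin: "supp_c (\<lambda>u. a * c u + b * d u) \<subseteq> supp_c c \<union> supp_c d"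
  by (auto simp: supp_c_def)
lemma fs_diff: "fs c \<Longrightarrow> fs d \<Longrightarrow> fs (\<lambda>u. c u - d u)"
  by (rule finite_subset[OF supp_diff]) auto
lemma fs_lin: "fs c \<Longrightarrow> fs d \<Longrightarrow> fs (\<lambda>u. a * c u + b * d u)"
  by (rule finite_subset[OF supp_lin]) auto

lemma ipf_mono:
  assumes "finite T" "S \<subseteq> T" "supp_c c \<subseteq> S" "supp_c d \<subseteq> S"
  shows "ipf K T c d = ipf K S c d"
proof -
  have cz: "\<And>w. w \<notin> S \<Longrightarrow> c w = 0" using assms(3) notin_supp by blast
  have dz: "\<And>w. w \<notin> S \<Longrightarrow> d w = 0" using assms(4) notin_supp by blast
  have "ipf K T c d = (\<Sum>u\<in>T. \<Sum>w\<in>S. c u * d w * K u w)"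
    unfolding ipf_def
  proof (rule sum.cong[OF refl])
    fix u assume "u \<in> T"
    show "(\<Sum>w\<in>T. c u * d w * K u w) = (\<Sum>w\<in>S. c u * d w * K u w)"
      by (rule sum.mono_neutral_right) (use assms dz in auto)
  qed
  also have "\<dots> = ipf K S c d"
    unfolding ipf_def
    by (intro sum.mono_neutral_right) (use assms cz in auto)
  finally show ?thesis .
qed

lemma ip_eq:
  assumes "finite S" "fs c" "fs d" "supp_c c \<subseteq> S" "supp_c d \<subseteq> S"
  shows "ip K c d = ipf K S c d"
  unfolding ip_def using assms by (intro ipf_mono[symmetric]) auto

lemma sqnorm_ip: "span_sqnorm K c = ip K c c"
  by (simp add: span_sqnorm_def ip_def ipf_def)

lemma span_fun_eq:
  assumes "finite S" "supp_c c \<subseteq> S"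
  shows "span_fun K c x = (\<Sum>u\<in>S. c u * K u x)"
  unfolding span_fun_def
  by (rule sum.mono_neutral_left) (use assms notin_supp in auto)

lemma span_fun_diff:
  assumes "fs c" "fs d"
  shows "span_fun K (\<lambda>u. c u - d u) x = span_fun K c x - span_fun K d x"
proof -
  let ?S = "supp_c c \<union> supp_c d"
  have "span_fun K (\<lambda>u. c u - d u) x = (\<Sum>u\<in>?S. (c u - d u) * K u x)"
    using assms supp_diff by (intro span_fun_eq) auto
  moreover have "span_fun K c x = (\<Sum>u\<in>?S. c u * K u x)"
    using assms by (intro span_fun_eq) auto
  moreover have "span_fun K d x = (\<Sum>u\<in>?S. d u * K u x)"
    using assms by (intro span_fun_eq) auto
  ultimately show ?thesis by (simp add: sum_subtractf left_diff_distrib)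
qed

lemma ip_span:
  assumes "fs c" "fs d"
  shows "ip K c d = (\<Sum>w\<in>supp_c d. d w * span_fun K c w)"
proof -
  let ?S = "supp_c c \<union> supp_c d"
  have "ip K c d = (\<Sum>u\<in>?S. \<Sum>w\<in>?S. c u * d w * K u w)" by (simp add: ip_def ipf_def)
  also have "\<dots> = (\<Sum>w\<in>?S. \<Sum>u\<in>?S. c u * d w * K u w)" by (rule sum.swap)
  also have "\<dots> = (\<Sum>w\<in>?S. d w * span_fun K c w)"
  proof (intro sum.cong refl)
    fix w
    have "span_fun K c w = (\<Sum>u\<in>?S. c u * K u w)" using assms by (intro span_fun_eq) auto
    then show "(\<Sum>u\<in>?S. c u * d w * K u w) = d w * span_fun K c w"
      by (simp add: sum_distrib_left algebra_simps)
  qed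
  also have "\<dots> = (\<Sum>w\<in>supp_c d. d w * span_fun K c w)"
    by (intro sum.mono_neutral_right) (use assms notin_supp in auto)
  finally show ?thesis .
qed

locale pdk =
  fixes K :: "real \<Rightarrow> real \<Rightarrow> real"
  assumes sym: "\<And>u w. K u w = K w u"
  and psd: "\<And>S c. finite S \<Longrightarrow> 0 \<le> (\<Sum>u\<in>S. \<Sum>w\<in>S. c u * c w * K u w)"
begin

lemma ipf_sym: "ipf K S c d = ipf K S d c"
  unfolding ipf_def by (subst sum.swap) (simp add: sym mult.commute mult.left_commute)

lemma ip_sym: "ip K c d = ip K d c"
  unfolding ip_def by (simp add: ipf_sym Un_commute)

lemma ip_nonneg: "0 \<le> ip K c c"
  unfolding ip_def ipf_def using psd by (cases "fs c") auto

lemma ipf_lin_left: "ipf K S (\<lambda>u. a * c u + b * d u) e = a * ipf K S c e + b * ipf K S d e"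
  unfolding ipf_def by (simp add: sum.distrib sum_distrib_left algebra_simps)

lemma ip_lin_left:
  assumes "fs c" "fs d" "fs e"
  shows "ip K (\<lambda>u. a * c u + b * d u) e = a * ip K c e + b * ip K d e"
proof -
  let ?S = "supp_c c \<union> supp_c d \<union> supp_c e"
  have "ip K (\<lambda>u. a * c u + b * d u) e = ipf K ?S (\<lambda>u. a * c u + b * d u) e"
    using assms supp_lin[of a c b d] by (intro ip_eq fs_lin) auto
  moreover have "ip K c e = ipf K ?S c e" using assms by (intro ip_eq) auto
  moreover have "ip K d e = ipf K ?S d e" using assms by (intro ip_eq) auto
  ultimately show ?thesis by (simp add: ipf_lin_left)
qed

lemma ip_lin_right:
  assumes "fs c" "fs d" "fs e"
  shows "ip K e (\<lambda>u. a * c u + b * d u) = a * ip K e c + b * ip K e d"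
  using ip_lin_left[OF assms] by (simp add: ip_sym)

lemma ip_expand:
  assumes "fs c" "fs d"
  shows "ip K (\<lambda>u. a * c u + b * d u) (\<lambda>u. a * c u + b * d u) = a^2 * ip K c c + 2*a*b * ip K c d + b^2 * ip K d d"
  using assms by (simp add: ip_lin_left ip_lin_right fs_lin ip_sym[of d c] power2_eq_square algebra_simps)

lemma CS:
  assumes "fs c" "fs d"
  shows "(ip K c d)^2 \<le> ip K c c * ip K d d"
proof -
  have q: "0 \<le> ip K c c + 2*l * ip K c d + l^2 * ip K d d" for l
    using ip_expand[OF assms, of 1 l] ip_nonneg[of "\<lambda>u. 1 * c u + l * d u"] by simp
  show ?thesis
  proof (cases "ip K d d = 0")
    case True
    show ?thesis
    proof (rule ccontr)
      assume "\<not> ?thesis"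
      then have "ip K c d \<noteq> 0" using True by simp
      then show False using q[of "- (ip K c c + 1) / (2 * ip K c d)"] True by (simp add: field_simps)
    qed
  next
    case False
    then have pos: "ip K d d > 0" using ip_nonneg[of d] by simp
    have "0 \<le> ip K c c + 2*(- ip K c d / ip K d d) * ip K c d + (- ip K c d / ip K d d)^2 * ip K d d"
      by (rule q)
    then have "0 \<le> ip K c c - (ip K c d)^2 / ip K d d"
      using pos by (simp add: power2_eq_square field_simps)
    then show ?thesis using pos by (simp add: field_simps)
  qed
qed

lemma ip_le_nrm:
  assumes "fs c" "fs d"
  shows "ip K c d \<le> nrm K c * nrm K d"
proof -
  have "\<bar>ip K c d\<bar> = sqrt ((ip K c d)^2)" by simp
  also have "\<dots> \<le> sqrt (ip K c c * ip K d d)" using CS[OF assms] by (rule real_sqrt_le_mono)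
  also have "\<dots> = nrm K c * nrm K d" by (simp add: nrm_def real_sqrt_mult)
  finally show ?thesis by simp
qed

lemma nrm_nonneg: "0 \<le> nrm K c"
  using ip_nonneg[of c] by (simp add: nrm_def)

lemma nrm_sq: assumes "fs c" shows "(nrm K c)^2 = ip K c c"
  using ip_nonneg[of c] by (simp add: nrm_def)

lemma nrm_tri:
  assumes "fs c" "fs d"
  shows "nrm K (\<lambda>u. c u + d u) \<le> nrm K c + nrm K d"
proof -
  have "(nrm K (\<lambda>u. c u + d u))^2 = ip K (\<lambda>u. 1 * c u + 1 * d u) (\<lambda>u. 1 * c u + 1 * d u)"
    using nrm_sq[OF fs_lin[OF assms, of 1 1]] by simp
  also have "\<dots> = ip K c c + 2 * ip K c d + ip K d d" using ip_expand[OF assms, of 1 1] by simp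
  also have "\<dots> \<le> (nrm K c)^2 + 2 * (nrm K c * nrm K d) + (nrm K d)^2"
    using ip_le_nrm[OF assms] nrm_sq[OF assms(1)] nrm_sq[OF assms(2)] by linarith
  also have "\<dots> = (nrm K c + nrm K d)^2" by (simp add: power2_eq_square algebra_simps)
  finally show ?thesis using nrm_nonneg by (meson add_nonneg_nonneg power2_le_imp_le)
qed

lemma nrm_diff_tri:
  assumes "fs c" "fs d"
  shows "nrm K c \<le> nrm K d + nrm K (\<lambda>u. c u - d u)"
proof -
  have "nrm K c = nrm K (\<lambda>u. d u + (c u - d u))" by simp
  also have "\<dots> \<le> nrm K d + nrm K (\<lambda>u. c u - d u)"
    using assms by (intro nrm_tri fs_diff) auto
  finally show ?thesis .
qed

lemma nrm_abs_diff:
  assumes "fs c" "fs d"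
  shows "\<bar>nrm K c - nrm K d\<bar> \<le> nrm K (\<lambda>u. c u - d u)"
proof -
  have "nrm K (\<lambda>u. d u - c u) = nrm K (\<lambda>u. c u - d u)"
  proof -
    have e1: "(\<lambda>u. d u - c u) = (\<lambda>u. (-1) * c u + 1 * d u)" by auto
    have e2: "(\<lambda>u. c u - d u) = (\<lambda>u. 1 * c u + (-1) * d u)" by auto
    have "ip K (\<lambda>u. d u - c u) (\<lambda>u. d u - c u) = ip K (\<lambda>u. c u - d u) (\<lambda>u. c u - d u)"
      unfolding e1 e2 ip_expand[OF assms] by simp
    then show ?thesis by (simp add: nrm_def)
  qed
  then show ?thesis using nrm_diff_tri[OF assms] nrm_diff_tri[OF assms(2,1)] by linarith
qed

end

context pdk begin

lemma nrm_neg: "nrm K (\<lambda>u. - d u) = nrm K d"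
proof -
  have e: "(\<lambda>u. - d u) = (\<lambda>u. (-1) * d u + 0 * d u)" by auto
  have "ip K (\<lambda>u. - d u) (\<lambda>u. - d u) = ip K d d"
  proof (cases "fs d")
    case True
    show ?thesis unfolding e ip_expand[OF True True] by simp
  next
    case False
    have "supp_c (\<lambda>u. - d u) = supp_c d" by (auto simp: supp_c_def)
    then show ?thesis using False by (simp add: ip_def ipf_def)
  qed
  then show ?thesis by (simp add: nrm_def)
qed

lemma nrm_diff_le:
  assumes "fs c" "fs d"
  shows "nrm K (\<lambda>u. c u - d u) \<le> nrm K c + nrm K d"
proof -
  have f: "fs (\<lambda>u. - d u)" using assms(2) by (simp add: supp_c_def)
  have "nrm K (\<lambda>u. c u - d u) = nrm K (\<lambda>u. c u + (- d u))" by simp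
  also have "\<dots> \<le> nrm K c + nrm K (\<lambda>u. - d u)" by (rule nrm_tri[OF assms(1) f])
  finally show ?thesis by (simp add: nrm_neg)
qed

lemma approx_fs: "approximating K cs \<omega> \<Longrightarrow> fs (cs n)"
  by (simp add: approximating_def)

lemma approx_cauchy_nrm:
  assumes ap: "approximating K cs \<omega>" and e: "e > 0"
  shows "\<exists>N. \<forall>n\<ge>N. \<forall>m\<ge>N. nrm K (\<lambda>u. cs n u - cs m u) < e"
proof -
  obtain N where N: "\<forall>n\<ge>N. \<forall>m\<ge>N. span_sqnorm K (\<lambda>u. cs n u - cs m u) < e^2"
    using ap e unfolding approximating_def by (meson zero_less_power)
  have "nrm K (\<lambda>u. cs n u - cs m u) < e" if "n \<ge> N" "m \<ge> N" for n m
  proof -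
    have "ip K (\<lambda>u. cs n u - cs m u) (\<lambda>u. cs n u - cs m u) < e^2" using N that by (simp add: sqnorm_ip)
    then have "sqrt (ip K (\<lambda>u. cs n u - cs m u) (\<lambda>u. cs n u - cs m u)) < sqrt (e^2)"
      using real_sqrt_less_mono by blast
    then show ?thesis using e by (simp add: nrm_def)
  qed
  then show ?thesis by blast
qed

lemma approx_nrm_conv:
  assumes ap: "approximating K cs \<omega>"
  shows "convergent (\<lambda>n. nrm K (cs n))"
proof -
  have "Cauchy (\<lambda>n. nrm K (cs n))"
  proof (rule metric_CauchyI)
    fix e :: real assume "e > 0"
    then obtain N where N: "\<forall>n\<ge>N. \<forall>m\<ge>N. nrm K (\<lambda>u. cs n u - cs m u) < e"
      using approx_cauchy_nrm[OF ap] by blast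
    have "dist (nrm K (cs m)) (nrm K (cs n)) < e" if "m \<ge> N" "n \<ge> N" for m n
    proof -
      have "nrm K (\<lambda>u. cs m u - cs n u) < e" using N that by blast
      then show ?thesis using nrm_abs_diff[OF approx_fs[OF ap] approx_fs[OF ap], of m n]
        by (simp add: dist_real_def)
    qed
    then show "\<exists>M. \<forall>m\<ge>M. \<forall>n\<ge>M. dist (nrm K (cs m)) (nrm K (cs n)) < e" by blast
  qed
  then show ?thesis by (simp add: Cauchy_convergent_iff)
qed

lemma approx_diff:
  assumes ap: "approximating K cs \<omega>" and aq: "approximating K ds \<omega>"
  shows "approximating K (\<lambda>n u. cs n u - ds n u) (\<lambda>_. 0)"
proof -
  have fc: "\<And>n. fs (cs n)" and fd: "\<And>n. fs (ds n)" using ap aq by (auto simp: approximating_def)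
  have fe: "\<And>n. fs (\<lambda>u. cs n u - ds n u)" using fc fd by (simp add: fs_diff)
  have cau: "\<exists>N. \<forall>n\<ge>N. \<forall>m\<ge>N. span_sqnorm K (\<lambda>u. (cs n u - ds n u) - (cs m u - ds m u)) < e"
    if e: "e > 0" for e
  proof -
    have se: "sqrt e / 2 > 0" using e by simp
    obtain N1 where N1: "\<forall>n\<ge>N1. \<forall>m\<ge>N1. nrm K (\<lambda>u. cs n u - cs m u) < sqrt e / 2"
      using approx_cauchy_nrm[OF ap se] by blast
    obtain N2 where N2: "\<forall>n\<ge>N2. \<forall>m\<ge>N2. nrm K (\<lambda>u. ds n u - ds m u) < sqrt e / 2"
      using approx_cauchy_nrm[OF aq se] by blast
    have "span_sqnorm K (\<lambda>u. (cs n u - ds n u) - (cs m u - ds m u)) < e"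
      if "n \<ge> max N1 N2" "m \<ge> max N1 N2" for n m
    proof -
      have eq: "(\<lambda>u. (cs n u - ds n u) - (cs m u - ds m u)) = (\<lambda>u. (cs n u - cs m u) - (ds n u - ds m u))"
        by (auto simp: algebra_simps)
      have "nrm K (\<lambda>u. (cs n u - cs m u) - (ds n u - ds m u)) \<le> nrm K (\<lambda>u. cs n u - cs m u) + nrm K (\<lambda>u. ds n u - ds m u)"
        using fc fd by (intro nrm_diff_le fs_diff) auto
      also have "\<dots> < sqrt e"
      proof -
        have "nrm K (\<lambda>u. cs n u - cs m u) < sqrt e / 2" using N1 that by simp
        moreover have "nrm K (\<lambda>u. ds n u - ds m u) < sqrt e / 2" using N2 that by simp
        ultimately show ?thesis by linarith
      qed
      finally have lt: "nrm K (\<lambda>u. (cs n u - ds n u) - (cs m u - ds m u)) < sqrt e" unfolding eq .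
      have f2: "fs (\<lambda>u. (cs n u - ds n u) - (cs m u - ds m u))" using fe by (simp add: fs_diff)
      have "(nrm K (\<lambda>u. (cs n u - ds n u) - (cs m u - ds m u)))^2 < (sqrt e)^2"
        using lt nrm_nonneg by (intro power_strict_mono) auto
      then show ?thesis using nrm_sq[OF f2] e by (simp add: sqnorm_ip)
    qed
    then show ?thesis by blast
  qed
  have pw: "(\<lambda>n. span_fun K (\<lambda>u. cs n u - ds n u) x) \<longlonglongrightarrow> 0" for x
  proof -
    have "(\<lambda>n. span_fun K (cs n) x - span_fun K (ds n) x) \<longlonglongrightarrow> \<omega> x - \<omega> x"
      using ap aq by (intro tendsto_diff) (auto simp: approximating_def)
    then show ?thesis using span_fun_diff[OF fc fd] by simp
  qed
  show ?thesis unfolding approximating_def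
  proof (intro conjI)
    show "\<forall>n. fs (\<lambda>u. cs n u - ds n u)" using fe by blast
    show "\<forall>x. (\<lambda>n. span_fun K (\<lambda>u. cs n u - ds n u) x) \<longlonglongrightarrow> 0" using pw by blast
    show "\<forall>e>0. \<exists>N. \<forall>n\<ge>N. \<forall>m\<ge>N. span_sqnorm K (\<lambda>u. (cs n u - ds n u) - (cs m u - ds m u)) < e"
      using cau by blast
  qed
qed

lemma approx_null:
  assumes ap: "approximating K E (\<lambda>_. 0)"
  shows "(\<lambda>n. ip K (E n) (E n)) \<longlonglongrightarrow> 0"
proof (rule LIMSEQ_I)
  fix r :: real assume r: "0 < r"
  have fsE: "\<And>n. fs (E n)" using ap by (simp add: approximating_def)
  obtain N1 where N1: "\<forall>n\<ge>N1. \<forall>m\<ge>N1. nrm K (\<lambda>u. E n u - E m u) < 1"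
    using approx_cauchy_nrm[OF ap, of 1] by auto
  define B where "B = nrm K (E N1) + 1"
  have Bpos: "B > 0" using nrm_nonneg[of "E N1"] by (simp add: B_def)
  have Bn: "nrm K (E n) \<le> B" if "n \<ge> N1" for n
  proof -
    have "nrm K (\<lambda>u. E n u - E N1 u) < 1" using N1 that by blast
    then show ?thesis using nrm_diff_tri[OF fsE fsE, of n N1] by (simp add: B_def)
  qed
  define \<delta> where "\<delta> = r / (2*B)"
  have dpos: "\<delta> > 0" using r Bpos by (simp add: \<delta>_def)
  obtain N2 where N2: "\<forall>n\<ge>N2. \<forall>m\<ge>N2. nrm K (\<lambda>u. E n u - E m u) < \<delta>"
    using approx_cauchy_nrm[OF ap dpos] by auto
  define m where "m = max N1 N2"
  have lim: "(\<lambda>n. ip K (E n) (E m)) \<longlonglongrightarrow> 0"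
  proof -
    have pw: "\<And>x. (\<lambda>n. span_fun K (E n) x) \<longlonglongrightarrow> 0" using ap by (simp add: approximating_def)
    have "(\<lambda>n. \<Sum>w\<in>supp_c (E m). E m w * span_fun K (E n) w) \<longlonglongrightarrow> (\<Sum>w\<in>supp_c (E m). E m w * 0)"
      by (intro tendsto_intros pw)
    then show ?thesis using ip_span[OF fsE fsE] by simp
  qed
  have r2: "r/2 > 0" using r by simp
  obtain N3 where N3: "\<forall>n\<ge>N3. norm (ip K (E n) (E m) - 0) < r/2"
    using LIMSEQ_D[OF lim r2] by blast
  show "\<exists>no. \<forall>n\<ge>no. norm (ip K (E n) (E n) - 0) < r"
  proof (intro exI allI impI)
    fix n assume n: "n \<ge> max m N3"
    have e1: "(\<lambda>u. E n u - E m u) = (\<lambda>u. 1 * E n u + (-1) * E m u)" by auto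
    have split: "ip K (E n) (E n) = ip K (E n) (\<lambda>u. E n u - E m u) + ip K (E n) (E m)"
      unfolding e1 ip_lin_right[OF fsE fsE fsE] by simp
    have "ip K (E n) (\<lambda>u. E n u - E m u) \<le> nrm K (E n) * nrm K (\<lambda>u. E n u - E m u)"
      using fsE by (intro ip_le_nrm fs_diff) auto
    also have "\<dots> \<le> B * \<delta>"
    proof (rule mult_mono)
      show "nrm K (E n) \<le> B" using Bn n by (simp add: m_def)
      show "nrm K (\<lambda>u. E n u - E m u) \<le> \<delta>" using N2 n by (simp add: m_def less_imp_le)
    qed (use Bpos nrm_nonneg in auto)
    also have "\<dots> = r/2" using Bpos by (simp add: \<delta>_def)
    finally have a: "ip K (E n) (\<lambda>u. E n u - E m u) \<le> r/2" .
    have b: "\<bar>ip K (E n) (E m)\<bar> < r/2" using N3 n by simp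
    have "0 \<le> ip K (E n) (E n)" by (rule ip_nonneg)
    then show "norm (ip K (E n) (E n) - 0) < r" using a b split by simp
  qed
qed

lemma approx_lim:
  assumes ap: "approximating K cs \<omega>"
  shows "(\<lambda>n. span_sqnorm K (cs n)) \<longlonglongrightarrow> rkhs_sqnorm K \<omega>"
proof -
  obtain L where L: "(\<lambda>n. nrm K (cs n)) \<longlonglongrightarrow> L"
    using approx_nrm_conv[OF ap] by (auto simp: convergent_def)
  have key: "(\<lambda>n. span_sqnorm K (ds n)) \<longlonglongrightarrow> L^2" if aq: "approximating K ds \<omega>" for ds
  proof -
    have ad: "approximating K (\<lambda>n u. cs n u - ds n u) (\<lambda>_. 0)" by (rule approx_diff[OF ap aq])
    have "(\<lambda>n. sqrt (ip K (\<lambda>u. cs n u - ds n u) (\<lambda>u. cs n u - ds n u))) \<longlonglongrightarrow> sqrt 0"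
      by (intro tendsto_real_sqrt approx_null[OF ad])
    then have d0: "(\<lambda>n. nrm K (\<lambda>u. cs n u - ds n u)) \<longlonglongrightarrow> 0" by (simp add: nrm_def)
    have "(\<lambda>n. nrm K (cs n) - nrm K (ds n)) \<longlonglongrightarrow> 0"
    proof (rule Lim_null_comparison[OF _ d0])
      show "\<forall>\<^sub>F n in sequentially. norm (nrm K (cs n) - nrm K (ds n)) \<le> nrm K (\<lambda>u. cs n u - ds n u)"
        using nrm_abs_diff[OF approx_fs[OF ap] approx_fs[OF aq]] by simp
    qed
    then have "(\<lambda>n. nrm K (cs n) - (nrm K (cs n) - nrm K (ds n))) \<longlonglongrightarrow> L - 0"
      by (intro tendsto_diff L)
    then have "(\<lambda>n. nrm K (ds n)) \<longlonglongrightarrow> L" by simp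
    then have "(\<lambda>n. (nrm K (ds n))^2) \<longlonglongrightarrow> L^2" by (intro tendsto_power)
    then show ?thesis using nrm_sq[OF approx_fs[OF aq]] by (simp add: sqnorm_ip)
  qed
  have "rkhs_sqnorm K \<omega> = L^2"
    unfolding rkhs_sqnorm_def
  proof (rule the_equality)
    show "\<forall>ds. approximating K ds \<omega> \<longrightarrow> (\<lambda>n. span_sqnorm K (ds n)) \<longlonglongrightarrow> L^2" using key by blast
    fix a assume "\<forall>ds. approximating K ds \<omega> \<longrightarrow> (\<lambda>n. span_sqnorm K (ds n)) \<longlonglongrightarrow> a"
    then have "(\<lambda>n. span_sqnorm K (cs n)) \<longlonglongrightarrow> a" using ap by blast
    with key[OF ap] show "a = L^2" using LIMSEQ_unique by blast
  qed
  with key[OF ap] show ?thesis by simp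
qed

lemma approx_lower:
  assumes ap: "approximating K cs \<omega>" and fd: "fs d"
  shows "2 * (\<Sum>w\<in>supp_c d. d w * \<omega> w) - ip K d d \<le> rkhs_sqnorm K \<omega>"
proof -
  have fc: "\<And>n. fs (cs n)" using ap by (simp add: approximating_def)
  have pw: "\<And>x. (\<lambda>n. span_fun K (cs n) x) \<longlonglongrightarrow> \<omega> x" using ap by (simp add: approximating_def)
  have "(\<lambda>n. \<Sum>w\<in>supp_c d. d w * span_fun K (cs n) w) \<longlonglongrightarrow> (\<Sum>w\<in>supp_c d. d w * \<omega> w)"
    by (intro tendsto_intros pw)
  then have l1: "(\<lambda>n. ip K (cs n) d) \<longlonglongrightarrow> (\<Sum>w\<in>supp_c d. d w * \<omega> w)"
    using ip_span[OF fc fd] by simp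
  have l2: "(\<lambda>n. 2 * ip K (cs n) d - ip K d d) \<longlonglongrightarrow> 2 * (\<Sum>w\<in>supp_c d. d w * \<omega> w) - ip K d d"
    by (intro tendsto_intros l1)
  have le: "2 * ip K (cs n) d - ip K d d \<le> span_sqnorm K (cs n)" for n
  proof -
    have "0 \<le> ip K (\<lambda>u. 1 * cs n u + (-1) * d u) (\<lambda>u. 1 * cs n u + (-1) * d u)" by (rule ip_nonneg)
    then show ?thesis unfolding ip_expand[OF fc fd] by (simp add: sqnorm_ip)
  qed
  show ?thesis by (rule LIMSEQ_le[OF l2 approx_lim[OF ap]]) (use le in auto)
qed

end



lemma conc:
  assumes A: "assumption_A v" and x: "x \<ge> 0" and y: "y \<ge> 0" and l: "0 \<le> l" "l \<le> 1"
  shows "l * sqrt (v x) + (1 - l) * sqrt (v y) \<le> sqrt (v (l * x + (1 - l) * y))"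
proof -
  have sc: "strictly_concave_on {0..} (\<lambda>x. sqrt (v x))" using A by (simp add: assumption_A_def)
  consider "l = 0" | "l = 1" | "x = y" | "0 < l" "l < 1" "x \<noteq> y" using l by linarith
  then show ?thesis
  proof cases
    case 3 then show ?thesis by (simp add: algebra_simps)
  next
    case 4
    then show ?thesis using sc x y unfolding strictly_concave_on_def by (auto intro: less_imp_le)
  qed auto
qed

lemma F1:
  assumes A: "assumption_A v" and v0: "v 0 = 0" and a: "0 < a" "a \<le> b"
  shows "(a / b) * sqrt (v b) \<le> sqrt (v a)"
proof -
  have "(a/b) * sqrt (v b) + (1 - a/b) * sqrt (v 0) \<le> sqrt (v ((a/b) * b + (1 - a/b) * 0))"
    using a by (intro conc[OF A]) auto
  then show ?thesis using a v0 by simp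
qed

lemma gmono:
  assumes A: "assumption_A v" and "0 \<le> a" "a \<le> b"
  shows "sqrt (v a) \<le> sqrt (v b)"
proof -
  have "strict_mono_on {0..} (\<lambda>x. sqrt (v x))" using A by (simp add: assumption_A_def)
  then show ?thesis using assms(2,3)
    by (cases "a = b") (auto simp: strict_mono_on_def less_imp_le)
qed

lemma MI:
  assumes A: "assumption_A v" and v0: "v 0 = 0" and vn: "\<forall>x\<ge>0. v x \<ge> 0"
    and s: "0 < s" "s < t"
  shows "(t - s) * (v t - v s) \<le> (t + s) * v (t - s)"
proof -
  define d where "d = t - s"
  define G1 where "G1 = sqrt (v t)"
  define G2 where "G2 = sqrt (v s)"
  define G3 where "G3 = sqrt (v d)"
  have d: "d > 0" using s by (simp add: d_def)
  have vnn: "v t \<ge> 0" "v s \<ge> 0" "v d \<ge> 0" using vn s d by auto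
  have vt: "v t = G1^2" "v s = G2^2" "v d = G3^2"
    unfolding G1_def G2_def G3_def using vnn by (simp_all add: real_sqrt_pow2)
  have g0: "G1 \<ge> 0" "G2 \<ge> 0" "G3 \<ge> 0" using vnn by (auto simp: G1_def G2_def G3_def)
  have h1: "(d/t) * G1 \<le> G3" using F1[OF A v0 d, of t] s by (simp add: G1_def G3_def d_def)
  then have h1': "d * G1 \<le> t * G3" using s by (simp add: field_simps)
  have G12: "G2 \<le> G1" using gmono[OF A, of s t] s by (simp add: G1_def G2_def)
  show ?thesis
  proof (cases "d \<le> s")
    case True
    have "(d/s) * G2 \<le> G3" using F1[OF A v0 d True] by (simp add: G2_def G3_def)
    then have h2: "d * G2 \<le> s * G3" using s by (simp add: field_simps)
    have h3: "(s/t) * G1 \<le> G2" using F1[OF A v0 s(1), of t] s by (simp add: G1_def G2_def)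
    have sub: "G1 \<le> G2 + G3"
    proof -
      have "(s/t) * G1 + (d/t) * G1 = G1" using s by (simp add: d_def field_simps)
      then show ?thesis using h1 h3 by linarith
    qed
    have sumb: "d * (G1 + G2) \<le> (t + s) * G3" using h1' h2 by (simp add: algebra_simps)
    have "d * (G1^2 - G2^2) = (G1 - G2) * (d * (G1 + G2))" by (simp add: power2_eq_square algebra_simps)
    also have "\<dots> \<le> (G1 - G2) * ((t + s) * G3)" using sumb G12 by (intro mult_left_mono) auto
    also have "\<dots> \<le> G3 * ((t + s) * G3)" using sub s g0 by (intro mult_right_mono) auto
    finally show ?thesis using vt by (simp add: d_def power2_eq_square algebra_simps)
  next
    case False
    have "(s/d) * G3 \<le> G2" using F1[OF A v0 s(1), of d] False by (simp add: G2_def G3_def)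
    then have h2: "s * G3 \<le> d * G2" using d by (simp add: field_simps)
    have q1: "(d * G1)^2 \<le> (t * G3)^2" using h1' d g0 by (intro power_mono) auto
    have q2: "(s * G3)^2 \<le> (d * G2)^2" using h2 s g0 by (intro power_mono) auto
    have "d * (d * (G1^2 - G2^2)) \<le> d * ((t + s) * G3^2)"
    proof -
      have "d * (d * (G1^2 - G2^2)) = (d*G1)^2 - (d*G2)^2" by (simp add: power2_eq_square algebra_simps)
      also have "\<dots> \<le> (t*G3)^2 - (s*G3)^2" using q1 q2 by linarith
      also have "\<dots> = d * ((t + s) * G3^2)" by (simp add: d_def power2_eq_square algebra_simps)
      finally show ?thesis .
    qed
    then have "d * (G1^2 - G2^2) \<le> (t + s) * G3^2" using d by simp
    then show ?thesis using vt by (simp add: d_def)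
  qed
qed




lemma shift_top: "filterlim (\<lambda>x::real. d + x) at_top at_top"
  by (rule filterlim_tendsto_add_at_top[OF tendsto_const filterlim_ident])

lemma inv_lim: "((\<lambda>x::real. c / (d + x)) \<longlongrightarrow> 0) at_top"
  by (rule tendsto_divide_0[OF tendsto_const filterlim_at_top_imp_at_infinity[OF shift_top]])

lemma one_minus_lim:
  fixes f :: "real \<Rightarrow> real"
  assumes "\<forall>\<^sub>F x in at_top. f x = 1 - c / (d + x)"
  shows "(f \<longlongrightarrow> 1) at_top"
proof -
  have "((\<lambda>x::real. 1 - c / (d + x)) \<longlongrightarrow> 1 - 0) at_top" by (intro tendsto_intros inv_lim)
  then show ?thesis using assms by (simp add: tendsto_cong)
qed


lemma vsq0:
  fixes v :: "real \<Rightarrow> real"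
  assumes a: "\<alpha> < 2" and lim: "((\<lambda>x. v x / x powr \<alpha>) \<longlongrightarrow> 0) at_top"
  shows "((\<lambda>x. v x / x^2) \<longlongrightarrow> 0) at_top"
proof -
  have p: "((\<lambda>x. x powr (\<alpha> - 2)) \<longlongrightarrow> 0) at_top"
    using a by (intro tendsto_neg_powr filterlim_ident) auto
  have "((\<lambda>x. (v x / x powr \<alpha>) * x powr (\<alpha> - 2)) \<longlongrightarrow> 0 * 0) at_top"
    by (intro tendsto_mult lim p)
  moreover have "eventually (\<lambda>x. (v x / x powr \<alpha>) * x powr (\<alpha> - 2) = v x / x^2) at_top"
  proof (rule eventually_mono[OF eventually_gt_at_top[of 0]])
    fix x :: real assume x: "x > 0"
    have "x powr (\<alpha> - 2) = x powr \<alpha> / x powr 2" by (simp add: powr_diff)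
    moreover have "x powr 2 = x^2" using x by (simp add: powr_numeral)
    ultimately show "(v x / x powr \<alpha>) * x powr (\<alpha> - 2) = v x / x^2" using x by simp
  qed
  ultimately show ?thesis by (simp add: tendsto_cong)
qed

lemma L2:
  assumes A: "assumption_A v" and v0: "v 0 = 0" and vn: "\<forall>x\<ge>0. v x \<ge> 0"
    and vsq: "((\<lambda>x. v x / x^2) \<longlongrightarrow> 0) at_top" and h: "h \<ge> 0"
  shows "((\<lambda>y. (v (y + h) - v y) / y) \<longlongrightarrow> 0) at_top"
proof (rule Lim_null_comparison)
  have c1: "((\<lambda>y. v (y + h) / (y + h)^2) \<longlongrightarrow> 0) at_top"
    using filterlim_compose[OF vsq shift_top[of h]] by (simp add: add.commute)
  have c2: "((\<lambda>y. (y + h) / y) \<longlongrightarrow> 1) at_top"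
    by (rule one_minus_lim[where c="-h" and d=0], rule eventually_mono[OF eventually_gt_at_top[of 0]]) (simp add: field_simps)
  have "((\<lambda>y. 2 * h * (v (y + h) / (y + h)^2) * ((y + h) / y)) \<longlongrightarrow> 2 * h * 0 * 1) at_top"
    by (intro tendsto_intros c1 c2)
  then show "((\<lambda>y. 2 * h * (v (y + h) / (y + h)^2) * ((y + h) / y)) \<longlongrightarrow> 0) at_top" by simp
  show "\<forall>\<^sub>F y in at_top. norm ((v (y + h) - v y) / y) \<le> 2 * h * (v (y + h) / (y + h)^2) * ((y + h) / y)"
  proof (rule eventually_mono[OF eventually_gt_at_top[of 0]])
    fix y :: real assume y: "y > 0"
    define G1 where "G1 = sqrt (v (y + h))"
    define G2 where "G2 = sqrt (v y)"
    have vnn: "v (y + h) \<ge> 0" "v y \<ge> 0" using vn y h by auto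
    have vt: "v (y + h) = G1^2" "v y = G2^2"
      unfolding G1_def G2_def using vnn by (simp_all add: real_sqrt_pow2)
    have g0: "G1 \<ge> 0" "G2 \<ge> 0" using vnn by (auto simp: G1_def G2_def)
    have m: "G2 \<le> G1" using gmono[OF A, of y "y + h"] y h by (simp add: G1_def G2_def)
    have f: "(y / (y + h)) * G1 \<le> G2" using F1[OF A v0 y, of "y + h"] h by (simp add: G1_def G2_def)
    then have f': "y * G1 \<le> (y + h) * G2" using y h by (simp add: field_simps)
    have "(y + h) * (G1 - G2) \<le> h * G1" using f' by (simp add: algebra_simps)
    have d1: "(y + h) * (G1^2 - G2^2) \<le> 2 * h * G1^2"
    proof -
      have "(y + h) * (G1^2 - G2^2) = ((y + h) * (G1 - G2)) * (G1 + G2)" by (simp add: power2_eq_square algebra_simps)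
      also have "\<dots> \<le> (h * G1) * (G1 + G2)"
        using \<open>(y + h) * (G1 - G2) \<le> h * G1\<close> g0 by (intro mult_right_mono) auto
      also have "\<dots> \<le> (h * G1) * (2 * G1)" using m g0 h by (intro mult_left_mono) auto
      finally show ?thesis by (simp add: power2_eq_square algebra_simps)
    qed
    have nn: "0 \<le> G1^2 - G2^2" using m g0 by (simp add: power_mono)
    have "norm ((v (y + h) - v y) / y) = (G1^2 - G2^2) / y" using nn y vt by simp
    also have "\<dots> \<le> (2 * h * G1^2 / (y + h)) / y"
      using d1 y h by (intro divide_right_mono) (auto simp: field_simps)
    also have "\<dots> = 2 * h * (v (y + h) / (y + h)^2) * ((y + h) / y)"
    proof -
      have p: "y + h > 0" using y h by simp
      have "(2 * h * G1^2 / (y + h)) / y = 2 * h * (G1^2 / ((y + h) * (y + h))) * ((y + h) / y)"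
        using p y by (simp add: divide_simps)
      then show ?thesis using vt by (simp add: power2_eq_square[of "y+h"])
    qed
    finally show "norm ((v (y + h) - v y) / y) \<le> 2 * h * (v (y + h) / (y + h)^2) * ((y + h) / y)" .
  qed
qed

lemma Gam_lim:
  assumes A: "assumption_A v" and v0: "v 0 = 0" and vn: "\<forall>x\<ge>0. v x \<ge> 0"
    and vsq: "((\<lambda>x. v x / x^2) \<longlongrightarrow> 0) at_top" and a: "a > 0"
  shows "((\<lambda>r. Gam v (-r) a / (1 + \<bar>r\<bar>)) \<longlongrightarrow> 0) at_top"
    and "((\<lambda>r. Gam v (-r) a / (1 + \<bar>r\<bar>)) \<longlongrightarrow> 0) at_bot"
proof -
  have l2: "((\<lambda>y. (v (y + a) - v y) / y) \<longlongrightarrow> 0) at_top" using L2[OF A v0 vn vsq] a by simp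
  have r1: "((\<lambda>r::real. r / (1 + r)) \<longlongrightarrow> 1) at_top"
    by (rule one_minus_lim[where c=1 and d=1], rule eventually_mono[OF eventually_gt_at_top[of 0]]) (simp add: field_simps)
  have r0: "((\<lambda>r::real. v a / (1 + r)) \<longlongrightarrow> 0) at_top" by (rule inv_lim)
  have "((\<lambda>r. (v a / (1 + r) - ((v (r + a) - v r) / r) * (r / (1 + r))) / 2) \<longlongrightarrow> (0 - 0 * 1) / 2) at_top"
    by (intro tendsto_intros r0 l2 r1) simp_all
  moreover have "eventually (\<lambda>r. (v a / (1 + r) - ((v (r + a) - v r) / r) * (r / (1 + r))) / 2
      = Gam v (-r) a / (1 + \<bar>r\<bar>)) at_top"
  proof (rule eventually_mono[OF eventually_gt_at_top[of 0]])
    fix r :: real assume r: "r > 0"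
    have "\<bar>a - - r\<bar> = r + a" "\<bar>-r\<bar> = r" "\<bar>r\<bar> = r" using r a by auto
    then have G: "Gam v (-r) a = (v r + v a - v (r + a)) / 2" using a by (simp add: Gam_def add.commute)
    have e: "((v (r + a) - v r) / r) * (r / (1 + r)) = (v (r + a) - v r) / (1 + r)" using r by simp
    show "(v a / (1 + r) - ((v (r + a) - v r) / r) * (r / (1 + r))) / 2 = Gam v (-r) a / (1 + \<bar>r\<bar>)"
    proof -
      have h1: "v a / (1 + r) - (v (r + a) - v r) / (1 + r) = (v a - (v (r + a) - v r)) / (1 + r)"
        by (rule diff_divide_distrib[symmetric])
      also have "\<dots> = (v r + v a - v (r + a)) / (1 + r)" by (simp add: algebra_simps)
      finally show ?thesis unfolding e G using \<open>\<bar>r\<bar> = r\<close> by (simp add: mult.commute)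
    qed
  qed
  ultimately have "((\<lambda>r. Gam v (-r) a / (1 + \<bar>r\<bar>)) \<longlongrightarrow> (0 - 0 * 1) / 2) at_top"
    by (rule Lim_transform_eventually)
  then show "((\<lambda>r. Gam v (-r) a / (1 + \<bar>r\<bar>)) \<longlongrightarrow> 0) at_top" by simp
  have l3: "((\<lambda>x. (v ((x - a) + a) - v (x - a)) / (x - a)) \<longlongrightarrow> 0) at_top"
    by (rule filterlim_compose[OF l2]) (use shift_top[of "-a"] in simp)
  have r2: "((\<lambda>x::real. (x - a) / (1 + x)) \<longlongrightarrow> 1) at_top"
    by (rule one_minus_lim[where c="1 + a" and d=1], rule eventually_mono[OF eventually_gt_at_top[of 0]]) (simp add: field_simps)
  have "((\<lambda>x. (v a / (1 + x) + ((v ((x - a) + a) - v (x - a)) / (x - a)) * ((x - a) / (1 + x))) / 2) \<longlongrightarrow> (0 + 0 * 1) / 2) at_top"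
    by (intro tendsto_intros r0 l3 r2) simp_all
  moreover have "eventually (\<lambda>x. (v a / (1 + x) + ((v ((x - a) + a) - v (x - a)) / (x - a)) * ((x - a) / (1 + x))) / 2
      = Gam v (-(-x)) a / (1 + \<bar>-x\<bar>)) at_top"
  proof (rule eventually_mono[OF eventually_gt_at_top[of a]])
    fix x :: real assume x: "x > a"
    have "\<bar>a - x\<bar> = x - a" "\<bar>x\<bar> = x" using x a by auto
    then have G: "Gam v (-(-x)) a = (v x + v a - v (x - a)) / 2" using a by (simp add: Gam_def)
    have xa: "(x - a) + a = x" by simp
    have xa2: "x - a \<noteq> 0" using x by simp
    have e: "((v ((x - a) + a) - v (x - a)) / (x - a)) * ((x - a) / (1 + x)) = (v x - v (x - a)) / (1 + x)"
      unfolding xa using xa2 x a by (simp add: divide_simps)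
    show "(v a / (1 + x) + ((v ((x - a) + a) - v (x - a)) / (x - a)) * ((x - a) / (1 + x))) / 2 = Gam v (-(-x)) a / (1 + \<bar>-x\<bar>)"
    proof -
      have h1: "v a / (1 + x) + (v x - v (x - a)) / (1 + x) = (v a + (v x - v (x - a))) / (1 + x)"
        by (rule add_divide_distrib[symmetric])
      also have "\<dots> = (v x + v a - v (x - a)) / (1 + x)" by (simp add: algebra_simps)
      finally show ?thesis unfolding e G using \<open>\<bar>x\<bar> = x\<close> by (simp add: mult.commute)
    qed
  qed
  ultimately have "((\<lambda>x. Gam v (-(-x)) a / (1 + \<bar>-x\<bar>)) \<longlongrightarrow> (0 + 0 * 1) / 2) at_top"
    by (rule Lim_transform_eventually)
  then show "((\<lambda>r. Gam v (-r) a / (1 + \<bar>r\<bar>)) \<longlongrightarrow> 0) at_bot"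
    by (simp add: filterlim_at_bot_mirror)
qed




theorem lemma3p10:
  fixes v :: "real \<Rightarrow> real" and M :: "'a measure" and A :: "real \<Rightarrow> 'a \<Rightarrow> real"
    and \<alpha> b c1 c2 s t :: real
  assumes v_cont: "continuous_on {0..} v"
    and v_nonneg: "\<forall>x\<ge>0. v x \<ge> 0"
    and v0: "v 0 = 0"
    and alpha: "\<alpha> < 2" "((\<lambda>x. v x / x powr \<alpha>) \<longlongrightarrow> 0) at_top"
    and M: "prob_space M"
    and A_gauss: "centered_gaussian_process M A"
    and A_paths: "\<forall>x\<in>space M. continuous_on UNIV (\<lambda>r. A r x)"
    and A0: "\<forall>x\<in>space M. A 0 x = 0"
    and A_var: "\<forall>r q. prob_space.variance M (\<lambda>x. A q x - A r x) = v \<bar>q - r\<bar>"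
    and A_stat: "\<forall>h. \<forall>F::real set. finite F \<longrightarrow>
        distr M (Pi\<^sub>M F (\<lambda>_. borel)) (\<lambda>x. \<lambda>u\<in>F. A (u + h) x - A h x)
      = distr M (Pi\<^sub>M F (\<lambda>_. borel)) (\<lambda>x. \<lambda>u\<in>F. A u x - A 0 x)"
    and Sigma_nonsing: "\<forall>s' t'. 0 < s' \<and> s' < t' \<longrightarrow> invertible (Sigma_mat v s' t')"
    and A_assm: "assumption_A v"
    and b: "b > 0" and c: "c1 > c2" "c2 > 0"
    and t: "t > b / (c1 - c2)"
    and s: "0 < s" "s < t"
    and k: "kfun v b c2 s t \<ge> c1 * s"
  shows "fstar v b c1 c2 s t \<in> U_set b c1 c2 s t \<inter> rkhs (Gam v)
    \<and> rate v (fstar v b c1 c2 s t) = (INF g\<in>U_set b c1 c2 s t. rate v g)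
    \<and> (INF g\<in>U_set b c1 c2 s t. rate v g) = ereal (Lambda v s t (b + c2 * t) (b + c2 * t - c1 * s))"
proof -
  interpret pdk "Gam v"
  proof
    show "Gam v u w = Gam v w u" for u w by (simp add: Gam_def abs_minus_commute)
    show "finite S \<Longrightarrow> 0 \<le> (\<Sum>u\<in>S. \<Sum>w\<in>S. c u * c w * Gam v u w)" for S c
      by (rule Gam_psd[OF M A_gauss A0 A_var])
  qed
  define y where "y = b + c2 * t"
  define x where "x = c1 * s"
  define V1 where "V1 = v t"
  define V2 where "V2 = v s"
  define V3 where "V3 = v (t - s)"
  define \<Gamma> where "\<Gamma> = Gam v s t"
  define \<Gamma>' where "\<Gamma>' = Gam v (t - s) t"
  have tpos: "t > 0" using s by simp
  have st: "s \<noteq> t" using s by simp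
  have Gdef: "\<Gamma> = (V2 + V1 - V3) / 2" using s by (simp add: \<Gamma>_def Gam_def V1_def V2_def V3_def)
  have G'def: "\<Gamma>' = (V3 + V1 - V2) / 2" using s by (simp add: \<Gamma>'_def Gam_def V1_def V2_def V3_def)
  have vnn: "V1 \<ge> 0" "V2 \<ge> 0" "V3 \<ge> 0" using v_nonneg s by (auto simp: V1_def V2_def V3_def)
  have V1pos: "V1 > 0"
  proof -
    have "strict_mono_on {0..} (\<lambda>x. sqrt (v x))" using A_assm by (simp add: assumption_A_def)
    then have "sqrt (v 0) < sqrt (v t)" using tpos by (auto simp: strict_mono_on_def)
    then show ?thesis using v0 by (simp add: V1_def)
  qed
  have V21: "V2 \<le> V1"
  proof -
    have "sqrt (v s) \<le> sqrt (v t)" using gmono[OF A_assm, of s t] s by simp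
    then show ?thesis by (simp add: V1_def V2_def)
  qed
  have G_mt_mt: "Gam v (-t) (-t) = V1" using v0 tpos by (simp add: Gam_def V1_def)
  have G_ms_ms: "Gam v (-s) (-s) = V2" using v0 s by (simp add: Gam_def V2_def)
  have G_mt_ms: "Gam v (-t) (-s) = \<Gamma>" using s by (simp add: Gam_def \<Gamma>_def abs_minus_commute)
  have G_ms_mt: "Gam v (-s) (-t) = \<Gamma>" using s by (simp add: Gam_def \<Gamma>_def abs_minus_commute)
  have G_tt: "Gam v t t = V1" using v0 tpos by (simp add: Gam_def V1_def)
  have G_ts: "Gam v t s = \<Gamma>" using s by (simp add: Gam_def \<Gamma>_def abs_minus_commute)
  have G_ss: "Gam v s s = V2" using v0 s by (simp add: Gam_def V2_def)
  have two: "(\<Sum>u\<in>{-t,-s}. \<Sum>w\<in>{-t,-s}. f u w) = f (-t) (-t) + f (-t) (-s) + f (-s) (-t) + f (-s) (-s)"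
    for f :: "real \<Rightarrow> real \<Rightarrow> real" using st by simp
  define D where "D = V1 * V2 - \<Gamma> * \<Gamma>"
  have Dnz: "D \<noteq> 0"
  proof -
    have "det (Sigma_mat v s t) \<noteq> 0" using Sigma_nonsing s invertible_det_nz by blast
    then show ?thesis by (simp add: Sigma_mat_def det_mat2 D_def V1_def V2_def \<Gamma>_def)
  qed
  have Dge: "D \<ge> 0"
  proof -
    define c where "c = (\<lambda>u. if u = -t then \<Gamma> else if u = -s then - V1 else 0)"
    have "0 \<le> (\<Sum>u\<in>{-t,-s}. \<Sum>w\<in>{-t,-s}. c u * c w * Gam v u w)" by (rule psd) simp
    also have "\<dots> = V1 * D"
      unfolding two using st by (simp add: c_def G_mt_mt G_ms_ms G_mt_ms G_ms_mt D_def algebra_simps)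
    finally show ?thesis using V1pos by (simp add: zero_le_mult_iff)
  qed
  have Dpos: "D > 0" using Dnz Dge by simp
  define \<theta>1 where "\<theta>1 = (V2 * y - \<Gamma> * x) / D"
  define \<theta>2 where "\<theta>2 = (- \<Gamma> * y + V1 * x) / D"
  have Sm: "Sigma_mat v s t = vector [vector [V1, \<Gamma>], vector [\<Gamma>, V2]]"
    by (simp add: Sigma_mat_def V1_def V2_def \<Gamma>_def)
  have inv: "matrix_inv (Sigma_mat v s t) = vector [vector [V2/D, -\<Gamma>/D], vector [-\<Gamma>/D, V1/D]]"
    using inv2[of V1 V2 \<Gamma>] Dnz unfolding Sm D_def by simp
  have th: "theta_star v b c1 c2 s t = vector [\<theta>1, \<theta>2]"
  proof -
    have "theta_star v b c1 c2 s t = matrix_inv (Sigma_mat v s t) *v vector [y, x]"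
      by (simp add: theta_star_def x_def y_def)
    also have "\<dots> = vector [V2/D * y + -\<Gamma>/D * x, -\<Gamma>/D * y + V1/D * x]"
      unfolding inv mulv2 by simp
    also have "\<dots> = vector [\<theta>1, \<theta>2]"
      unfolding \<theta>1_def \<theta>2_def by (simp add: add_divide_distrib diff_divide_distrib)
    finally show ?thesis .
  qed
  have eq1: "V1 * \<theta>1 + \<Gamma> * \<theta>2 = y"
  proof -
    have n: "V1*(V2*y - \<Gamma>*x) + \<Gamma>*(-\<Gamma>*y + V1*x) = D * y" by (simp add: D_def algebra_simps)
    have "V1 * \<theta>1 + \<Gamma> * \<theta>2 = (V1*(V2*y - \<Gamma>*x) + \<Gamma>*(-\<Gamma>*y + V1*x))/D"
      unfolding \<theta>1_def \<theta>2_def by (simp add: add_divide_distrib)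
    then show ?thesis unfolding n using Dnz by simp
  qed
  have eq2: "\<Gamma> * \<theta>1 + V2 * \<theta>2 = x"
  proof -
    have n: "\<Gamma>*(V2*y - \<Gamma>*x) + V2*(-\<Gamma>*y + V1*x) = D * x" by (simp add: D_def algebra_simps)
    have "\<Gamma> * \<theta>1 + V2 * \<theta>2 = (\<Gamma>*(V2*y - \<Gamma>*x) + V2*(-\<Gamma>*y + V1*x))/D"
      unfolding \<theta>1_def \<theta>2_def by (simp add: add_divide_distrib)
    then show ?thesis unfolding n using Dnz by simp
  qed
  define cs where "cs = (\<lambda>u. if u = -t then -\<theta>1 else if u = -s then -\<theta>2 else 0)"
  have supp_cs: "supp_c cs \<subseteq> {-t,-s}" by (auto simp: supp_c_def cs_def split: if_splits)
  have fcs: "fs cs" by (rule finite_subset[OF supp_cs]) simp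
  have fstar_eq: "fstar v b c1 c2 s t r = -\<theta>1 * Gam v (-r) t - \<theta>2 * Gam v (-r) s" for r
    by (simp add: fstar_def th)
  have Gsw: "Gam v (-t) r = Gam v (-r) t" "Gam v (-s) r = Gam v (-r) s" for r
    by (simp_all add: Gam_def algebra_simps)
  have span: "span_fun (Gam v) cs r = fstar v b c1 c2 s t r" for r
  proof -
    have "span_fun (Gam v) cs r = (\<Sum>u\<in>{-t,-s}. cs u * Gam v u r)" by (rule span_fun_eq) (use supp_cs in auto)
    also have "\<dots> = -\<theta>1 * Gam v (-t) r - \<theta>2 * Gam v (-s) r" using st by (simp add: cs_def)
    finally show ?thesis unfolding fstar_eq Gsw .
  qed
  define N where "N = \<theta>1 * y + \<theta>2 * x"
  have ipcs: "ip (Gam v) cs cs = N"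
  proof -
    have "ip (Gam v) cs cs = ipf (Gam v) {-t,-s} cs cs" by (rule ip_eq) (use fcs supp_cs in auto)
    also have "\<dots> = \<theta>1 * (V1 * \<theta>1 + \<Gamma> * \<theta>2) + \<theta>2 * (\<Gamma> * \<theta>1 + V2 * \<theta>2)"
      unfolding ipf_def two using st by (simp add: cs_def G_mt_mt G_ms_ms G_mt_ms G_ms_mt algebra_simps)
    also have "\<dots> = N" unfolding eq1 eq2 N_def ..
    finally show ?thesis .
  qed
  have Lam: "Lambda v s t (b + c2 * t) (b + c2 * t - c1 * s) = N / 2"
  proof -
    have Sm2: "Sigma_mat v (t - s) t = vector [vector [V1, \<Gamma>'], vector [\<Gamma>', V3]]"
      by (simp add: Sigma_mat_def V1_def V3_def \<Gamma>'_def)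
    have G2: "2 * \<Gamma> = V2 + V1 - V3" using Gdef by simp
    have G2': "2 * \<Gamma>' = V3 + V1 - V2" using G'def by simp
    have e4: "4*(V1*V3 - \<Gamma>'*\<Gamma>') = 4*(V1*V2 - \<Gamma>*\<Gamma>)"
    proof -
      have "4*(V1*V3 - \<Gamma>'*\<Gamma>') = 4*V1*V3 - (2*\<Gamma>')*(2*\<Gamma>')" by (simp add: algebra_simps)
      also have "\<dots> = 4*V1*V3 - (V3+V1-V2)*(V3+V1-V2)" unfolding G2' ..
      also have "\<dots> = 4*V1*V2 - (V2+V1-V3)*(V2+V1-V3)" by (simp add: algebra_simps)
      also have "\<dots> = 4*V1*V2 - (2*\<Gamma>)*(2*\<Gamma>)" unfolding G2 ..
      also have "\<dots> = 4*(V1*V2 - \<Gamma>*\<Gamma>)" by (simp add: algebra_simps)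
      finally show ?thesis .
    qed
    have D2: "V1 * V3 - \<Gamma>' * \<Gamma>' = D" using e4 by (simp add: D_def)
    have inv': "matrix_inv (Sigma_mat v (t - s) t) = vector [vector [V3/D, -\<Gamma>'/D], vector [-\<Gamma>'/D, V1/D]]"
      using inv2[of V1 V3 \<Gamma>'] Dnz unfolding Sm2 D2 by simp
    have l1: "Lambda v s t (b + c2 * t) (b + c2 * t - c1 * s) = Lambda v s t y (y - x)" by (simp add: x_def y_def)
    have l2: "Lambda v s t y (y - x) = (1/2) * (y * (V3/D * y + -\<Gamma>'/D * (y - x)) + (y - x) * (-\<Gamma>'/D * y + V1/D * (y - x)))"
      unfolding Lambda_def Let_def inv' mulv2 inner2 by simp
    have l3: "(1/2) * (y * (V3/D * y + -\<Gamma>'/D * (y - x)) + (y - x) * (-\<Gamma>'/D * y + V1/D * (y - x)))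
        = (V3*y*y - 2*\<Gamma>'*y*(y-x) + V1*(y-x)*(y-x)) / (2*D)"
      using Dnz by (simp add: field_simps)
    have l4: "V3*y*y - 2*\<Gamma>'*y*(y-x) + V1*(y-x)*(y-x) = V2*y*y - 2*\<Gamma>*x*y + V1*x*x"
      unfolding G2 G2' by (simp add: algebra_simps)
    have l5: "N = (V2*y*y - 2*\<Gamma>*x*y + V1*x*x) / D"
      unfolding N_def \<theta>1_def \<theta>2_def using Dnz by (simp add: field_simps)
    show ?thesis unfolding l1 l2 l3 l4 l5 by simp
  qed
  let ?f = "fstar v b c1 c2 s t"
  have vc: "continuous_on UNIV (\<lambda>r. v \<bar>h r\<bar>)" if "continuous_on UNIV h" for h :: "real \<Rightarrow> real"
    by (rule continuous_on_compose2[OF v_cont, of UNIV "\<lambda>r. \<bar>h r\<bar>"]) (use that in \<open>auto intro: continuous_intros\<close>)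
  have fcont: "continuous_on UNIV ?f"
  proof -
    have "continuous_on UNIV (\<lambda>r. -\<theta>1 * ((v \<bar>-r\<bar> + v \<bar>t\<bar> - v \<bar>t - - r\<bar>) / 2) - \<theta>2 * ((v \<bar>-r\<bar> + v \<bar>s\<bar> - v \<bar>s - - r\<bar>) / 2))"
      by (intro continuous_intros vc) auto
    then show ?thesis unfolding fstar_eq[abs_def] Gam_def .
  qed
  have f0: "?f 0 = 0" using v0 by (simp add: fstar_eq Gam_def)
  have vsq: "((\<lambda>x. v x / x^2) \<longlongrightarrow> 0) at_top" by (rule vsq0[OF alpha])
  have lims: "((\<lambda>r. ?f r / (1 + \<bar>r\<bar>)) \<longlongrightarrow> 0) F" if F: "F = at_top \<or> F = at_bot" for F
  proof -
    have l1: "((\<lambda>r. Gam v (-r) t / (1 + \<bar>r\<bar>)) \<longlongrightarrow> 0) F" "((\<lambda>r. Gam v (-r) s / (1 + \<bar>r\<bar>)) \<longlongrightarrow> 0) F"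
      using F Gam_lim[OF A_assm v0 v_nonneg vsq tpos] Gam_lim[OF A_assm v0 v_nonneg vsq s(1)] by auto
    have "((\<lambda>r. -\<theta>1 * (Gam v (-r) t / (1 + \<bar>r\<bar>)) - \<theta>2 * (Gam v (-r) s / (1 + \<bar>r\<bar>))) \<longlongrightarrow> -\<theta>1 * 0 - \<theta>2 * 0) F"
      by (intro tendsto_intros l1)
    moreover have "(\<lambda>r. -\<theta>1 * (Gam v (-r) t / (1 + \<bar>r\<bar>)) - \<theta>2 * (Gam v (-r) s / (1 + \<bar>r\<bar>))) = (\<lambda>r. ?f r / (1 + \<bar>r\<bar>))"
      by (rule ext) (simp add: fstar_eq diff_divide_distrib)
    ultimately show ?thesis by simp
  qed
  have fOmega: "?f \<in> Omega" unfolding Omega_def using fcont f0 lims by auto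
  have ft: "?f (-t) = - y"
    using eq1 by (simp add: fstar_eq G_tt G_ts algebra_simps)
  have fs': "?f (-s) = - x"
    using eq2 by (simp add: fstar_eq G_ss algebra_simps \<Gamma>_def)
  have fU: "?f \<in> U_set b c1 c2 s t"
    unfolding U_set_def using fOmega ft fs' by (simp add: x_def y_def)
  have apf: "approximating (Gam v) (\<lambda>n. cs) ?f"
  proof -
    have z: "span_sqnorm (Gam v) (\<lambda>u. cs u - cs u) = 0" by (simp add: span_sqnorm_def supp_c_def)
    show ?thesis unfolding approximating_def using fcs z span by simp
  qed
  have frk: "?f \<in> rkhs (Gam v)" unfolding rkhs_def using apf by blast
  have fnorm: "rkhs_sqnorm (Gam v) ?f = N"
  proof -
    have "(\<lambda>n. span_sqnorm (Gam v) cs) \<longlonglongrightarrow> rkhs_sqnorm (Gam v) ?f" using approx_lim[OF apf] by simp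
    then have "span_sqnorm (Gam v) cs = rkhs_sqnorm (Gam v) ?f" by (simp add: LIMSEQ_const_iff)
    then show ?thesis using ipcs by (simp add: sqnorm_ip)
  qed
  have ratef: "rate v ?f = ereal (N / 2)" using frk fnorm by (simp add: rate_def)
  have ypos: "y > 0"
  proof -
    have "c2 * t > 0" using c tpos by simp
    then show ?thesis using b by (simp add: y_def)
  qed
  have th2: "\<theta>2 \<le> 0"
  proof -
    have "\<Gamma> / V1 * y \<ge> x" using k by (simp add: kfun_def \<Gamma>_def V1_def x_def y_def)
    then have "\<Gamma> * y \<ge> V1 * x" using V1pos by (simp add: field_simps)
    then show ?thesis unfolding \<theta>2_def using Dpos by (simp add: divide_nonpos_pos)
  qed
  have th12: "\<theta>1 + \<theta>2 \<ge> 0"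
  proof -
    have c12: "c1 - c2 > 0" using c by simp
    have "b < t * (c1 - c2)" using t c12 by (simp add: field_simps)
    then have yt: "y < c1 * t" by (simp add: y_def algebra_simps)
    have xt: "y * s \<le> x * t"
    proof -
      have "y * s \<le> (c1 * t) * s" using yt s by (intro mult_right_mono) auto
      then show ?thesis by (simp add: x_def algebra_simps)
    qed
    have mi: "(t - s) * (V1 - V2) \<le> (t + s) * V3"
      using MI[OF A_assm v0 v_nonneg s] by (simp add: V1_def V2_def V3_def)
    have VG: "V1 - \<Gamma> \<ge> 0" using Gdef V21 vnn by simp
    define P where "P = V2 * y - \<Gamma> * x - \<Gamma> * y + V1 * x"
    have "t * P = t * (V2 - \<Gamma>) * y + (V1 - \<Gamma>) * (x * t)" by (simp add: P_def algebra_simps)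
    also have "\<dots> \<ge> t * (V2 - \<Gamma>) * y + (V1 - \<Gamma>) * (y * s)"
      using VG xt by (simp add: mult_left_mono)
    finally have tP: "t * P \<ge> t * (V2 - \<Gamma>) * y + (V1 - \<Gamma>) * (y * s)" .
    have G2: "2 * \<Gamma> = V2 + V1 - V3" using Gdef by simp
    have "2 * (t * (V2 - \<Gamma>) * y + (V1 - \<Gamma>) * (y * s)) = 2 * t * V2 * y - t * y * (2 * \<Gamma>) + 2 * V1 * y * s - y * s * (2 * \<Gamma>)"
      by (simp add: algebra_simps)
    also have "\<dots> = 2 * t * V2 * y - t * y * (V2 + V1 - V3) + 2 * V1 * y * s - y * s * (V2 + V1 - V3)" unfolding G2 ..
    also have "\<dots> = y * ((t + s) * V3 - (t - s) * (V1 - V2))" by (simp add: algebra_simps)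
    finally have "t * (V2 - \<Gamma>) * y + (V1 - \<Gamma>) * (y * s) = y * ((t + s) * V3 - (t - s) * (V1 - V2)) / 2"
      by simp
    also have "\<dots> \<ge> 0" using ypos mi by simp
    finally have "t * P \<ge> 0" using tP by linarith
    then have "P \<ge> 0" using tpos by (simp add: zero_le_mult_iff)
    moreover have "\<theta>1 + \<theta>2 = P / D" unfolding \<theta>1_def \<theta>2_def P_def by (simp add: add_divide_distrib[symmetric] algebra_simps)
    ultimately show ?thesis using Dpos by simp
  qed
  have lower: "ereal (N / 2) \<le> rate v g" if gU: "g \<in> U_set b c1 c2 s t" for g
  proof (cases "g \<in> rkhs (Gam v)")
    case False
    then show ?thesis by (simp add: rate_def)
  next
    case True
    then obtain cg where cg: "approximating (Gam v) cg g" by (auto simp: rkhs_def)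
    have low: "2 * (\<Sum>w\<in>supp_c cs. cs w * g w) - ip (Gam v) cs cs \<le> rkhs_sqnorm (Gam v) g"
      by (rule approx_lower[OF cg fcs])
    have "(\<Sum>w\<in>supp_c cs. cs w * g w) = (\<Sum>w\<in>{-t,-s}. cs w * g w)"
      by (rule sum.mono_neutral_left) (use supp_cs in \<open>auto simp: supp_c_def\<close>)
    also have "\<dots> = \<theta>1 * (- g (-t)) + \<theta>2 * (- g (-s))" using st by (simp add: cs_def)
    finally have sm: "(\<Sum>w\<in>supp_c cs. cs w * g w) = \<theta>1 * (- g (-t)) + \<theta>2 * (- g (-s))" .
    have gA: "- g (-t) \<ge> y" and gB: "- g (-s) \<le> - g (-t) - y + x"
      using gU by (auto simp: U_set_def x_def y_def)
    have "\<theta>2 * (- g (-s)) \<ge> \<theta>2 * (- g (-t) - y + x)" using gB th2 by (rule mult_left_mono_neg)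
    moreover have "(\<theta>1 + \<theta>2) * (- g (-t)) \<ge> (\<theta>1 + \<theta>2) * y" using gA th12 by (rule mult_left_mono)
    ultimately have "\<theta>1 * (- g (-t)) + \<theta>2 * (- g (-s)) \<ge> N" by (simp add: N_def algebra_simps)
    then have "rkhs_sqnorm (Gam v) g \<ge> N" using low sm ipcs by simp
    then show ?thesis using True by (simp add: rate_def)
  qed
  have INF_eq: "(INF g\<in>U_set b c1 c2 s t. rate v g) = ereal (N / 2)"
  proof (rule antisym)
    show "(INF g\<in>U_set b c1 c2 s t. rate v g) \<le> ereal (N / 2)"
      using INF_lower[OF fU, of "rate v"] ratef by simp
    show "ereal (N / 2) \<le> (INF g\<in>U_set b c1 c2 s t. rate v g)"
      by (rule INF_greatest) (rule lower)
  qed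
  show ?thesis using fU frk ratef INF_eq Lam by simp
qed


end
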